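(* Let $x_1,\dots,x_n$ be indeterminates, $R=\mathbb R[x_1,\dots,x_n]$, and $f_1,\dots,f_n\in R$. Let $g_1,\dots,g_n$ be the (unique) elements of the fraction field of $R$ such that $\mathfrak p(x)=\sum_{i=1}^n g_i x^{i-1}$ satisfies $\mathfrak p(x_j)=f_j$ for $j=1,\dots,n$. Then all $g_i$ lie in $R$ if and only if $x_i-x_j$ divides $f_i-f_j$ in $R$ for all $i\neq j$. *)

theory Defs
  imports Complex_Main "HOL-Library.Poly_Mapping" "HOL-Computational_Algebra.Fraction_Field"
begin

text \<open>Real multivariate polynomials in the indeterminates indexed by the finite type 'n
  (so n = CARD('n)), represented as finitely supported maps from monomials
  (exponent vectors, finitely supported 'n to nat) to real coefficients.\<close>
type_synonym 'n rpoly = "('n \<Rightarrow>\<^sub>0 nat) \<Rightarrow>\<^sub>0 real"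

definition Var :: "'n \<Rightarrow> 'n rpoly" where
  "Var i = Poly_Mapping.single (Poly_Mapping.single i 1) 1"

definition to_fract :: "'n::{finite,linorder} rpoly \<Rightarrow> 'n rpoly fract" where
  "to_fract p = Fract p 1"

end

theory Submission
  imports Defs "HOL-Computational_Algebra.Polynomial"
begin

definition mon :: "('n::{finite,linorder} \<Rightarrow> 'n rpoly) \<Rightarrow> ('n \<Rightarrow>\<^sub>0 nat) \<Rightarrow> 'n rpoly" where
  "mon \<psi> m = (\<Prod>i\<in>UNIV. \<psi> i ^ poly_mapping.lookup m i)"

definition ev :: "('n::{finite,linorder} \<Rightarrow> 'n rpoly) \<Rightarrow> 'n rpoly \<Rightarrow> 'n rpoly" where
  "ev \<psi> p = (\<Sum>m\<in>Poly_Mapping.keys p. Poly_Mapping.single 0 (poly_mapping.lookup p m) * mon \<psi> m)"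

lemma ev_superset:
  assumes "finite K" "Poly_Mapping.keys p \<subseteq> K"
  shows "ev \<psi> p = (\<Sum>m\<in>K. Poly_Mapping.single 0 (poly_mapping.lookup p m) * mon \<psi> m)"
  unfolding ev_def
  by (rule sum.mono_neutral_left) (use assms in \<open>auto simp: in_keys_iff\<close>)

lemma ev_add: "ev \<psi> (p + q) = ev \<psi> p + ev \<psi> q"
proof -
  let ?K = "Poly_Mapping.keys p \<union> Poly_Mapping.keys q"
  have k: "Poly_Mapping.keys (p + q) \<subseteq> ?K" by (rule keys_add)
  show ?thesis
    apply (subst ev_superset[OF _ k], simp)
    apply (subst ev_superset[of ?K p], simp, simp)
    apply (subst ev_superset[of ?K q], simp, simp)
    by (simp add: lookup_add single_add distrib_right sum.distrib)
qed

lemma ev_zero: "ev \<psi> 0 = 0" by (simp add: ev_def)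

lemma ev_sum: "finite A \<Longrightarrow> ev \<psi> (\<Sum>a\<in>A. p a) = (\<Sum>a\<in>A. ev \<psi> (p a))"
  by (induction A rule: finite_induct) (auto simp: ev_zero ev_add)

lemma ev_single: "ev \<psi> (Poly_Mapping.single m c) = Poly_Mapping.single 0 c * mon \<psi> m"
  by (subst ev_superset[of "{m}"]) auto

lemma mon_add: "mon \<psi> (m1 + m2) = mon \<psi> m1 * mon \<psi> m2"
  by (simp add: mon_def lookup_add power_add prod.distrib)

lemma mon_zero: "mon \<psi> 0 = 1" by (simp add: mon_def)

lemma expand_pm: "p = (\<Sum>m\<in>Poly_Mapping.keys p. Poly_Mapping.single m (poly_mapping.lookup p m))"
  by (rule poly_mapping_eqI) (simp add: lookup_sum lookup_single when_def in_keys_iff)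

lemma ev_mult: "ev \<psi> (p * q) = ev \<psi> p * ev \<psi> q"
proof -
  let ?P = "Poly_Mapping.keys p" and ?Q = "Poly_Mapping.keys q"
  let ?cp = "poly_mapping.lookup p" and ?cq = "poly_mapping.lookup q"
  have "p * q = (\<Sum>m\<in>?P. Poly_Mapping.single m (?cp m)) * (\<Sum>m'\<in>?Q. Poly_Mapping.single m' (?cq m'))"
    using expand_pm[of p] expand_pm[of q] by simp
  also have "\<dots> = (\<Sum>m\<in>?P. \<Sum>m'\<in>?Q. Poly_Mapping.single (m + m') (?cp m * ?cq m'))"
    by (simp add: sum_product mult_single)
  finally have pq: "p * q = \<dots>" .
  have "ev \<psi> (p * q) = (\<Sum>m\<in>?P. \<Sum>m'\<in>?Q. (Poly_Mapping.single 0 (?cp m) * mon \<psi> m) * (Poly_Mapping.single 0 (?cq m') * mon \<psi> m'))"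
    unfolding pq
    by (simp add: ev_sum ev_single mon_add mult_single[of 0 _ 0, simplified, symmetric] ac_simps)
  also have "\<dots> = ev \<psi> p * ev \<psi> q"
    by (simp add: ev_def sum_product)
  finally show ?thesis .
qed

lemma ev_one: "ev \<psi> 1 = 1"
  using ev_single[of \<psi> 0 1] by (simp add: mon_zero)

lemma ev_diff: "ev \<psi> (p - q) = ev \<psi> p - ev \<psi> q"
  using ev_add[of \<psi> "p - q" q] by (simp add: algebra_simps)

lemma ev_prod: "finite A \<Longrightarrow> ev \<psi> (\<Prod>a\<in>A. p a) = (\<Prod>a\<in>A. ev \<psi> (p a))"
  by (induction A rule: finite_induct) (auto simp: ev_one ev_mult)

lemma ev_Var: "ev \<psi> (Var i) = \<psi> i"
proof -
  have "mon \<psi> (Poly_Mapping.single i 1) = \<psi> i"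
    unfolding mon_def lookup_single
    by (subst prod.remove[of _ i]) (auto simp: when_def intro!: prod.neutral)
  then show ?thesis unfolding Var_def ev_single by simp
qed

lemma Var_power: "Var i ^ k = Poly_Mapping.single (Poly_Mapping.single i k) 1"
  by (induction k) (auto simp: Var_def mult_single single_add[symmetric] add.commute)

lemma prod_single_mon: "finite A \<Longrightarrow> (\<Prod>i\<in>A. Poly_Mapping.single (Poly_Mapping.single i (k i)) (1::real))
   = Poly_Mapping.single (\<Sum>i\<in>A. Poly_Mapping.single i (k i)) 1"
  by (induction A rule: finite_induct) (auto simp: mult_single)

lemma sum_single_lookup: "(\<Sum>i\<in>UNIV. Poly_Mapping.single i (poly_mapping.lookup m i)) = (m :: 'n::{finite,linorder} \<Rightarrow>\<^sub>0 nat)"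
  by (rule poly_mapping_eqI) (simp add: lookup_sum lookup_single when_def)

lemma mon_Var: "mon Var m = Poly_Mapping.single m 1"
  unfolding mon_def Var_power by (simp add: prod_single_mon sum_single_lookup)


lemma dvd_mult_diff:
  fixes d :: "'a::comm_ring_1"
  assumes "d dvd (a - b)" "d dvd (c - e)" shows "d dvd (a * c - b * e)"
proof -
  have "a * c - b * e = a * (c - e) + (a - b) * e" by (simp add: algebra_simps)
  then show ?thesis using assms by (simp add: dvd_add dvd_mult dvd_mult2)
qed

lemma dvd_power_diff':
  fixes d :: "'a::comm_ring_1"
  assumes "d dvd (x - y)" shows "d dvd (x ^ k - y ^ k)"
  by (induction k) (auto intro: dvd_mult_diff assms)

lemma dvd_prod_diff:
  fixes d :: "'a::comm_ring_1"
  assumes "finite A" "\<And>a. a \<in> A \<Longrightarrow> d dvd (u a - v a)"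
  shows "d dvd (prod u A - prod v A)"
  using assms by (induction A rule: finite_induct) (auto intro: dvd_mult_diff)

lemma dvd_sum_diff:
  fixes d :: "'a::comm_ring_1"
  assumes "\<And>a. a \<in> A \<Longrightarrow> d dvd (u a - v a)"
  shows "d dvd (sum u A - sum v A)"
proof -
  have "sum u A - sum v A = (\<Sum>a\<in>A. u a - v a)" by (simp add: sum_subtractf)
  then show ?thesis using assms by (simp add: dvd_sum)
qed

lemma cong_ev:
  assumes "\<And>i. d dvd (\<psi> i - Var i)"
  shows "d dvd (ev \<psi> p - p)"
proof -
  let ?c = "poly_mapping.lookup p"
  have p: "p = (\<Sum>m\<in>Poly_Mapping.keys p. Poly_Mapping.single 0 (?c m) * mon Var m)"
    apply (subst expand_pm[of p])
    by (simp add: mon_Var mult_single)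
  have "d dvd (ev \<psi> p - (\<Sum>m\<in>Poly_Mapping.keys p. Poly_Mapping.single 0 (?c m) * mon Var m))"
    unfolding ev_def
    apply (rule dvd_sum_diff)
    apply (rule dvd_mult_diff, simp)
    unfolding mon_def
    apply (rule dvd_prod_diff, simp)
    apply (rule dvd_power_diff')
    by (rule assms)
  then show ?thesis using p by simp
qed

lemma Var_inj: "Var i = Var j \<longleftrightarrow> i = j"
proof
  assume "Var i = Var j"
  then have "poly_mapping.lookup (Var i) (Poly_Mapping.single i 1) = poly_mapping.lookup (Var j) (Poly_Mapping.single i 1)" by simp
  then have "Poly_Mapping.single j (1::nat) = Poly_Mapping.single i 1"
    by (simp add: Var_def lookup_single when_def split: if_splits)
  then have "poly_mapping.lookup (Poly_Mapping.single j (1::nat)) i = poly_mapping.lookup (Poly_Mapping.single i 1) i" by simp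
  then show "i = j" by (simp add: lookup_single when_def split: if_splits)
qed simp

lemma ker_ev:
  fixes a t :: "'n::{finite,linorder}"
  defines "\<psi> \<equiv> Var(a := Var t)"
  shows "ev \<psi> p = 0 \<longleftrightarrow> (Var a - Var t) dvd p"
proof
  assume "ev \<psi> p = 0"
  moreover have "(Var a - Var t) dvd (ev \<psi> p - p)"
    by (rule cong_ev) (auto simp: \<psi>_def, metis dvd_minus_iff dvd_refl minus_diff_eq)
  ultimately show "(Var a - Var t) dvd p"
    by (metis dvd_minus_iff diff_0)
next
  assume "(Var a - Var t) dvd p"
  then obtain k where "p = (Var a - Var t) * k" by (auto elim: dvdE)
  then show "ev \<psi> p = 0" by (simp add: ev_mult ev_diff ev_Var \<psi>_def)
qed

lemma prod_dvd:
  fixes a :: "'n::{finite,linorder}" and F :: "'n rpoly"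
  assumes "a \<notin> S" "\<And>s. s \<in> S \<Longrightarrow> (Var a - Var s) dvd F"
  shows "(\<Prod>s\<in>S. (Var a - Var s)) dvd F"
  using finite[of S] assms
proof (induction S rule: finite_induct)
  case empty then show ?case by simp
next
  case (insert t S)
  let ?Q = "\<Prod>s\<in>S. (Var a - Var s)"
  have "?Q dvd F" using insert by auto
  then obtain c where c: "F = ?Q * c" by (auto elim: dvdE)
  define \<psi> where "\<psi> = Var(a := Var t)"
  have "(Var a - Var t) dvd F" using insert by auto
  then have "ev \<psi> F = 0" using ker_ev[of a t F] by (simp add: \<psi>_def)
  then have "ev \<psi> ?Q * ev \<psi> c = 0" by (simp add: c ev_mult)
  moreover have "ev \<psi> ?Q \<noteq> 0"
  proof -
    have "ev \<psi> ?Q = (\<Prod>s\<in>S. (Var t - Var s))"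
      using insert.prems by (auto simp: ev_prod ev_diff ev_Var \<psi>_def intro!: prod.cong)
    moreover have "\<forall>s\<in>S. Var t - Var s \<noteq> 0" using insert.hyps by (auto simp: Var_inj)
    moreover have "finite S" by simp
    ultimately show ?thesis using prod_zero_iff[of S "\<lambda>s. Var t - Var s"] by auto
  qed
  ultimately have "ev \<psi> c = 0" by simp
  then have "(Var a - Var t) dvd c" using ker_ev[of a t c] by (simp add: \<psi>_def)
  then show ?case using c insert.hyps by (simp add: mult_dvd_mono ac_simps)
qed


lemma poly_diff_dvd:
  fixes x y :: "'a::comm_ring_1"
  shows "(x - y) dvd (poly P x - poly P y)"
proof -
  have "poly P x = poly ([:-y, 1:] * synthetic_div P y + [:poly P y:]) x"
    by (simp only: synthetic_div_correct')
  then have "poly P x - poly P y = (x - y) * poly (synthetic_div P y) x"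
    by (simp add: algebra_simps)
  then show ?thesis by simp
qed

lemma newton:
  fixes f :: "'n::{finite,linorder} \<Rightarrow> 'n rpoly"
  assumes dv: "\<forall>i j. i \<noteq> j \<longrightarrow> (Var i - Var j) dvd (f i - f j)"
  shows "\<exists>p. degree p \<le> card S - 1 \<and> (\<forall>j\<in>S. poly p (Var j) = f j)"
  using finite[of S]
proof (induction S rule: finite_induct)
  case empty
  show ?case by (rule exI[of _ 0]) simp
next
  case (insert a S)
  obtain p where deg: "degree p \<le> card S - 1" and ip: "\<forall>j\<in>S. poly p (Var j) = f j"
    using insert.IH by blast
  let ?F = "f a - poly p (Var a)"
  have "\<And>s. s \<in> S \<Longrightarrow> (Var a - Var s) dvd ?F"
  proof -
    fix s assume s: "s \<in> S"
    then have "s \<noteq> a" using insert.hyps by auto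
    then have d1: "(Var a - Var s) dvd (f a - f s)" using dv by auto
    have d2: "(Var a - Var s) dvd (poly p (Var a) - poly p (Var s))" by (rule poly_diff_dvd)
    have eq: "?F = (f a - f s) - (poly p (Var a) - poly p (Var s))" using ip s by simp
    show "(Var a - Var s) dvd ?F" by (subst eq) (rule dvd_diff[OF d1 d2])
  qed
  then have "(\<Prod>s\<in>S. (Var a - Var s)) dvd ?F"
    using insert.hyps by (intro prod_dvd) auto
  then obtain c where c: "?F = (\<Prod>s\<in>S. (Var a - Var s)) * c" by (auto elim: dvdE)
  define W where "W = (\<Prod>s\<in>S. [:- Var s, 1:])"
  define p' where "p' = p + smult c W"
  have polyW: "poly W x = (\<Prod>s\<in>S. (x - Var s))" for x
    by (simp add: W_def poly_prod)
  have degW: "degree W \<le> card S"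
  proof -
    have "degree W \<le> sum (degree \<circ> (\<lambda>s. [:- Var s, 1:])) S"
      unfolding W_def by (rule degree_prod_sum_le) simp
    also have "\<dots> = card S" by simp
    finally show ?thesis .
  qed
  have "degree p' \<le> card (insert a S) - 1"
  proof -
    have "degree p' \<le> max (degree p) (degree (smult c W))"
      unfolding p'_def by (rule degree_add_le_max)
    also have "\<dots> \<le> card S" using deg degW degree_smult_le[of c W] by auto
    finally show ?thesis using insert.hyps by simp
  qed
  moreover have "\<forall>j\<in>insert a S. poly p' (Var j) = f j"
  proof
    fix j assume j: "j \<in> insert a S"
    show "poly p' (Var j) = f j"
    proof (cases "j = a")
      case True
      then show ?thesis using c by (simp add: p'_def polyW algebra_simps)
    next
      case False
      then have "j \<in> S" using j by auto
      then have "(\<Prod>s\<in>S. (Var j - Var s)) = 0"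
        using insert.hyps(1) by (auto simp: prod_zero_iff)
      then show ?thesis using ip \<open>j \<in> S\<close> by (simp add: p'_def polyW)
    qed
  qed
  ultimately show ?case by blast
qed

lemma coeffs_unique:
  fixes X :: "'n::finite \<Rightarrow> 'k::field" and u v :: "nat \<Rightarrow> 'k"
  assumes inj: "inj X"
    and eq: "\<forall>j. (\<Sum>i<card (UNIV::'n set). u i * X j ^ i) = (\<Sum>i<card (UNIV::'n set). v i * X j ^ i)"
  shows "\<forall>i<card (UNIV::'n set). u i = v i"
proof -
  let ?N = "card (UNIV::'n set)"
  have N0: "?N > 0" by (simp add: card_gt_0_iff)
  define q where "q = (\<Sum>i<?N. monom (u i - v i) i)"
  have pq: "poly q (X j) = 0" for j
  proof -
    have "poly q (X j) = (\<Sum>i<?N. (u i - v i) * X j ^ i)"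
      by (simp add: q_def poly_sum poly_monom)
    also have "\<dots> = (\<Sum>i<?N. u i * X j ^ i) - (\<Sum>i<?N. v i * X j ^ i)"
      by (simp add: sum_subtractf left_diff_distrib)
    finally show ?thesis using eq by simp
  qed
  have "q = 0"
  proof (rule ccontr)
    assume q0: "q \<noteq> 0"
    have dq: "degree q \<le> ?N - 1"
      unfolding q_def
      by (rule degree_sum_le) (auto intro: order.trans[OF degree_monom_le])
    have "range X \<subseteq> {x. poly q x = 0}" using pq by auto
    then have "card (range X) \<le> card {x. poly q x = 0}"
      using poly_roots_finite[OF q0] by (rule card_mono[rotated])
    also have "\<dots> \<le> degree q" by (rule card_poly_roots_bound[OF q0])
    finally have "?N \<le> ?N - 1" using dq card_image[OF inj] N0 by simp
    then show False using N0 by simp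
  qed
  show ?thesis
  proof (intro allI impI)
    fix i assume i: "i < ?N"
    have "coeff q i = u i - v i"
      using i by (simp add: q_def coeff_sum coeff_monom)
    then show "u i = v i" using \<open>q = 0\<close> by simp
  qed
qed

lemma to_fract_add: "to_fract (a + b) = to_fract a + to_fract b"
  by (simp add: to_fract_def)
lemma to_fract_mult: "to_fract (a * b) = to_fract a * to_fract b"
  by (simp add: to_fract_def)
lemma to_fract_diff: "to_fract (a - b) = to_fract a - to_fract b"
  by (simp add: to_fract_def)
lemma to_fract_zero: "to_fract 0 = 0"
  by (simp add: to_fract_def Zero_fract_def)
lemma to_fract_one: "to_fract 1 = 1"
  by (simp add: to_fract_def One_fract_def)
lemma to_fract_power: "to_fract (a ^ k) = to_fract a ^ k"
  by (induction k) (auto simp: to_fract_mult to_fract_one)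
lemma to_fract_sum: "to_fract (\<Sum>i\<in>A. h i) = (\<Sum>i\<in>A. to_fract (h i))"
  by (induction A rule: infinite_finite_induct) (auto simp: to_fract_add to_fract_zero)
lemma to_fract_inj: "to_fract a = to_fract b \<longleftrightarrow> a = b"
  by (simp add: to_fract_def eq_fract)

theorem proposition3p2:
  fixes f :: "'n::{finite,linorder} \<Rightarrow> 'n rpoly"
    and g :: "nat \<Rightarrow> 'n rpoly fract"
  assumes interp: "\<forall>j. (\<Sum>i<card (UNIV :: 'n set). g i * to_fract (Var j) ^ i) = to_fract (f j)"
  shows "(\<forall>i<card (UNIV :: 'n set). g i \<in> range to_fract)
     \<longleftrightarrow> (\<forall>i j. i \<noteq> j \<longrightarrow> (Var i - Var j) dvd (f i - f j))"
proof
  let ?N = "card (UNIV :: 'n set)"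
  assume rg: "\<forall>i<?N. g i \<in> range to_fract"
  define h where "h i = (SOME r. g i = to_fract r)" for i
  have gh: "g i = to_fract (h i)" if "i < ?N" for i
    using rg that unfolding h_def by (metis (mono_tags, lifting) rangeE someI_ex)
  define P where "P = (\<Sum>i<?N. monom (h i) i)"
  have fP: "f j = poly P (Var j)" for j
  proof -
    have "to_fract (f j) = (\<Sum>i<?N. to_fract (h i) * to_fract (Var j) ^ i)"
      using interp gh by (auto intro: sum.cong simp: interp[rule_format, symmetric])
    also have "\<dots> = to_fract (\<Sum>i<?N. h i * Var j ^ i)"
      by (simp add: to_fract_sum to_fract_mult to_fract_power)
    finally have "f j = (\<Sum>i<?N. h i * Var j ^ i)" by (simp add: to_fract_inj)
    then show ?thesis by (simp add: P_def poly_sum poly_monom)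
  qed
  show "\<forall>i j. i \<noteq> j \<longrightarrow> (Var i - Var j) dvd (f i - f j)"
    by (metis fP poly_diff_dvd)
next
  let ?N = "card (UNIV :: 'n set)"
  assume dv: "\<forall>i j. i \<noteq> j \<longrightarrow> (Var i - Var j) dvd (f i - f j)"
  obtain p where deg: "degree p \<le> card (UNIV :: 'n set) - 1" and ip: "\<forall>j\<in>UNIV. poly p (Var j) = f j"
    using newton[OF dv] by blast
  have N0: "?N > 0" by (simp add: card_gt_0_iff)
  have pe: "poly p x = (\<Sum>i<?N. coeff p i * x ^ i)" for x
  proof -
    have "poly p x = (\<Sum>i\<le>degree p. coeff p i * x ^ i)" by (rule poly_altdef)
    also have "\<dots> = (\<Sum>i<?N. coeff p i * x ^ i)"
      apply (rule sum.mono_neutral_left)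
      using deg N0 by (auto simp: coeff_eq_0)
    finally show ?thesis .
  qed
  have "\<forall>j. (\<Sum>i<?N. g i * (to_fract \<circ> Var) j ^ i) = (\<Sum>i<?N. to_fract (coeff p i) * (to_fract \<circ> Var) j ^ i)"
  proof
    fix j
    have "(\<Sum>i<?N. to_fract (coeff p i) * (to_fract \<circ> Var) j ^ i) = to_fract (poly p (Var j))"
      by (simp add: pe to_fract_sum to_fract_mult to_fract_power)
    then show "(\<Sum>i<?N. g i * (to_fract \<circ> Var) j ^ i) = (\<Sum>i<?N. to_fract (coeff p i) * (to_fract \<circ> Var) j ^ i)"
      using interp ip by simp
  qed
  moreover have "inj (to_fract \<circ> Var :: 'n \<Rightarrow> _)"
    by (auto simp: inj_def to_fract_inj Var_inj)
  ultimately have "\<forall>i<?N. g i = to_fract (coeff p i)"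
    by (rule coeffs_unique[rotated])
  then show "\<forall>i<?N. g i \<in> range to_fract" by auto
qed

end
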